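(* Let $X$, $A$, $B$, $C$, $\varepsilon$, $a$, $b$, $c$, $d$ be as in the context and define $Y$, $(\cdot|\cdot)$, $H$, $\hat B$, $V$ as in the context. Then: (i) $(Y,(\cdot|\cdot))$ is a complex Hilbert space. (ii) $H$ is densely defined, linear and self-adjoint in $Y$. (iii) $\hat B$ is linear; if $B$ is symmetric then $\hat B$ is symmetric; if $B$ is bounded then $\hat B$ is bounded and $|\hat B|\leqslant\|B\|$. (iv) $H+\hat B$ is closed; if $B$ is symmetric then $H+\hat B$ is self-adjoint. (v) $V$ is linear and bounded with $|V|\leqslant(c^2+d^2/\varepsilon)^{1/2}$.
   Context: $(X,\langle\cdot|\cdot\rangle)$ is a nontrivial complex Hilbert space with norm $\|\cdot\|$. $A:D(A)\to X$ is a densely defined self-adjoint linear operator with $\langle\xi|A\xi\rangle\geqslant\varepsilon\langle\xi|\xi\rangle$ for all $\xi\in D(A)$ for some $\varepsilon\in(0,\infty)$; $A^{1/2}$ is its positive self-adjoint square root. $B:D(A^{1/2})\to X$ is linear with $\|B\xi\|^2\leqslant a^2\|A^{1/2}\xi\|^2+b^2\|\xi\|^2$ for all $\xi\in D(A^{1/2})$, for some $a\in[0,1)$, $b\in\mathbb{R}$. $C:D(A^{1/2})\to X$ is linear with $\|C\xi\|^2\leqslant c^2\|A^{1/2}\xi\|^2+d^2\|\xi\|^2$ for all $\xi\in D(A^{1/2})$, for some real $c,d$. $Y:=D(A^{1/2})\times X$ with $(\xi|\eta):=\langle A^{1/2}\xi_1|A^{1/2}\eta_1\rangle+\langle\xi_2|\eta_2\rangle$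 for $\xi=(\xi_1,\xi_2),\eta=(\eta_1,\eta_2)\in Y$; $|\cdot|$ denotes the induced norm and operator norms on $Y$, $\|B\|$ the operator norm on $X$. $H:D(A)\times D(A^{1/2})\to Y$, $H\xi:=(-i\xi_2,iA\xi_1)$; $\hat B:D(H)\to Y$, $\hat B\xi:=(0,-B\xi_2)$; $V:Y\to Y$, $V\xi:=(0,iC\xi_1)$. *)

theory Defs
  imports "HOL-Analysis.Analysis"
begin

text \<open>A (possibly non-closed-under-the-whole-type) complex inner product space is
given by a complex scalar multiplication sc on an abelian group type, a carrier
set W and a sesquilinear form ip (conjugate linear in the first, linear in the
second argument, as in the bra-ket notation of the paper).\<close>

definition hnorm :: "('a \<Rightarrow> 'a \<Rightarrow> complex) \<Rightarrow> 'a \<Rightarrow> real" where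
  "hnorm ip x = sqrt (Re (ip x x))"

definition csubspace :: "(complex \<Rightarrow> 'a::ab_group_add \<Rightarrow> 'a) \<Rightarrow> 'a set \<Rightarrow> bool" where
  "csubspace sc D \<longleftrightarrow> 0 \<in> D \<and> (\<forall>x\<in>D. \<forall>y\<in>D. x + y \<in> D) \<and> (\<forall>c. \<forall>x\<in>D. sc c x \<in> D)"

definition hilbert_space ::
  "(complex \<Rightarrow> 'a::ab_group_add \<Rightarrow> 'a) \<Rightarrow> 'a set \<Rightarrow> ('a \<Rightarrow> 'a \<Rightarrow> complex) \<Rightarrow> bool" where
  "hilbert_space sc W ip \<longleftrightarrow>
     vector_space sc \<and> csubspace sc W \<and>
     (\<forall>x\<in>W. \<forall>y\<in>W. \<forall>z\<in>W. ip x (y + z) = ip x y + ip x z) \<and>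
     (\<forall>x\<in>W. \<forall>y\<in>W. \<forall>c. ip x (sc c y) = c * ip x y) \<and>
     (\<forall>x\<in>W. \<forall>y\<in>W. ip y x = cnj (ip x y)) \<and>
     (\<forall>x\<in>W. 0 \<le> Re (ip x x)) \<and>
     (\<forall>x\<in>W. ip x x = 0 \<longrightarrow> x = 0) \<and>
     (\<forall>f::nat \<Rightarrow> 'a. (\<forall>n. f n \<in> W) \<and>
          (\<forall>e>0. \<exists>N. \<forall>m\<ge>N. \<forall>n\<ge>N. hnorm ip (f m - f n) < e)
        \<longrightarrow> (\<exists>l\<in>W. (\<lambda>n. hnorm ip (f n - l)) \<longlonglongrightarrow> 0))"

definition lin_op :: "(complex \<Rightarrow> 'a::ab_group_add \<Rightarrow> 'a) \<Rightarrow> 'a set \<Rightarrow> 'a set \<Rightarrow> ('a \<Rightarrow> 'a) \<Rightarrow> bool" where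
  "lin_op sc W D T \<longleftrightarrow> csubspace sc D \<and> D \<subseteq> W \<and> T ` D \<subseteq> W \<and>
     (\<forall>x\<in>D. \<forall>y\<in>D. T (x + y) = T x + T y) \<and> (\<forall>c. \<forall>x\<in>D. T (sc c x) = sc c (T x))"

definition dense_in :: "('a::ab_group_add \<Rightarrow> 'a \<Rightarrow> complex) \<Rightarrow> 'a set \<Rightarrow> 'a set \<Rightarrow> bool" where
  "dense_in ip W D \<longleftrightarrow> D \<subseteq> W \<and> (\<forall>x\<in>W. \<forall>e>0. \<exists>y\<in>D. hnorm ip (x - y) < e)"

definition symmetric_op ::
  "(complex \<Rightarrow> 'a::ab_group_add \<Rightarrow> 'a) \<Rightarrow> 'a set \<Rightarrow> ('a \<Rightarrow> 'a \<Rightarrow> complex) \<Rightarrow> 'a set \<Rightarrow> ('a \<Rightarrow> 'a) \<Rightarrow> bool" where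
  "symmetric_op sc W ip D T \<longleftrightarrow> lin_op sc W D T \<and> dense_in ip W D \<and>
     (\<forall>x\<in>D. \<forall>y\<in>D. ip (T x) y = ip x (T y))"

definition adj_dom :: "'a set \<Rightarrow> ('a \<Rightarrow> 'a \<Rightarrow> complex) \<Rightarrow> 'a set \<Rightarrow> ('a \<Rightarrow> 'a) \<Rightarrow> 'a set" where
  "adj_dom W ip D T = {y\<in>W. \<exists>z\<in>W. \<forall>x\<in>D. ip (T x) y = ip x z}"

definition selfadjoint_op ::
  "(complex \<Rightarrow> 'a::ab_group_add \<Rightarrow> 'a) \<Rightarrow> 'a set \<Rightarrow> ('a \<Rightarrow> 'a \<Rightarrow> complex) \<Rightarrow> 'a set \<Rightarrow> ('a \<Rightarrow> 'a) \<Rightarrow> bool" where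
  "selfadjoint_op sc W ip D T \<longleftrightarrow> symmetric_op sc W ip D T \<and> adj_dom W ip D T = D"

definition bounded_op :: "('a \<Rightarrow> 'a \<Rightarrow> complex) \<Rightarrow> 'a set \<Rightarrow> ('a \<Rightarrow> 'a) \<Rightarrow> bool" where
  "bounded_op ip D T \<longleftrightarrow> (\<exists>M. \<forall>x\<in>D. hnorm ip (T x) \<le> M * hnorm ip x)"

definition op_norm :: "('a \<Rightarrow> 'a \<Rightarrow> complex) \<Rightarrow> 'a set \<Rightarrow> ('a \<Rightarrow> 'a) \<Rightarrow> real" where
  "op_norm ip D T = Inf {M. 0 \<le> M \<and> (\<forall>x\<in>D. hnorm ip (T x) \<le> M * hnorm ip x)}"

definition closed_op :: "('a::ab_group_add \<Rightarrow> 'a \<Rightarrow> complex) \<Rightarrow> 'a set \<Rightarrow> 'a set \<Rightarrow> ('a \<Rightarrow> 'a) \<Rightarrow> bool" where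
  "closed_op ip W D T \<longleftrightarrow>
     (\<forall>f x y. (\<forall>n. f n \<in> D) \<and> x \<in> W \<and> y \<in> W \<and>
        (\<lambda>n. hnorm ip (f n - x)) \<longlonglongrightarrow> 0 \<and> (\<lambda>n. hnorm ip (T (f n) - y)) \<longlonglongrightarrow> 0
        \<longrightarrow> x \<in> D \<and> T x = y)"

text \<open>The energy space Y = D(A^(1/2)) x X and its structure; S stands for A^(1/2).\<close>
definition scaleY :: "(complex \<Rightarrow> 'a \<Rightarrow> 'a) \<Rightarrow> complex \<Rightarrow> 'a \<times> 'a \<Rightarrow> 'a \<times> 'a" where
  "scaleY sc c \<xi> = (sc c (fst \<xi>), sc c (snd \<xi>))"

definition ipY :: "('a \<Rightarrow> 'a \<Rightarrow> complex) \<Rightarrow> ('a \<Rightarrow> 'a) \<Rightarrow> 'a \<times> 'a \<Rightarrow> 'a \<times> 'a \<Rightarrow> complex" where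
  "ipY ip S \<xi> \<eta> = ip (S (fst \<xi>)) (S (fst \<eta>)) + ip (snd \<xi>) (snd \<eta>)"

definition opH :: "(complex \<Rightarrow> 'a \<Rightarrow> 'a) \<Rightarrow> ('a \<Rightarrow> 'a) \<Rightarrow> 'a \<times> 'a \<Rightarrow> 'a \<times> 'a" where
  "opH sc A \<xi> = (sc (- \<i>) (snd \<xi>), sc \<i> (A (fst \<xi>)))"

definition opBhat :: "('a::ab_group_add \<Rightarrow> 'a) \<Rightarrow> 'a \<times> 'a \<Rightarrow> 'a \<times> 'a" where
  "opBhat B \<xi> = (0, - B (snd \<xi>))"

definition opV :: "(complex \<Rightarrow> 'a::ab_group_add \<Rightarrow> 'a) \<Rightarrow> ('a \<Rightarrow> 'a) \<Rightarrow> 'a \<times> 'a \<Rightarrow> 'a \<times> 'a" where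
  "opV sc C \<xi> = (0, sc \<i> (C (fst \<xi>)))"

end

theory Submission
  imports Defs
begin


locale hsp =
  fixes sc :: "complex \<Rightarrow> 'x::ab_group_add \<Rightarrow> 'x" and ip :: "'x \<Rightarrow> 'x \<Rightarrow> complex"
  assumes hs: "hilbert_space sc UNIV ip"
begin

lemmas hsd = hs[unfolded hilbert_space_def]

sublocale vs: vector_space sc using hsd by (rule conjunct1)

abbreviation nrm where "nrm \<equiv> hnorm ip"

lemmas hs3 = hsd[THEN conjunct2, THEN conjunct2]
lemma ip_add_right: "ip x (y + z) = ip x y + ip x z"
  using hs3[THEN conjunct1] by simp
lemma ip_scale_right: "ip x (sc c y) = c * ip x y"
  using hs3[THEN conjunct2, THEN conjunct1] by simp
lemma ip_conj: "ip y x = cnj (ip x y)"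
  using hs3[THEN conjunct2, THEN conjunct2, THEN conjunct1] by blast
lemma ip_pos: "0 \<le> Re (ip x x)"
  using hs3[THEN conjunct2, THEN conjunct2, THEN conjunct2, THEN conjunct1] by simp
lemma ip_def0: "ip x x = 0 \<Longrightarrow> x = 0"
  using hs3[THEN conjunct2, THEN conjunct2, THEN conjunct2, THEN conjunct2, THEN conjunct1] by simp
lemma complete: "(\<forall>e>0. \<exists>N. \<forall>m\<ge>N. \<forall>n\<ge>N. nrm (f m - f n) < e)
        \<Longrightarrow> (\<exists>l. (\<lambda>n. nrm (f n - l)) \<longlonglongrightarrow> 0)"
  using hs3[THEN conjunct2, THEN conjunct2, THEN conjunct2, THEN conjunct2, THEN conjunct2, rule_format, of f] by simp

lemma ip_add_left: "ip (x + y) z = ip x z + ip y z"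
proof -
  have "ip (x + y) z = cnj (ip z (x + y))" by (rule ip_conj)
  also have "\<dots> = cnj (ip z x) + cnj (ip z y)" by (simp add: ip_add_right)
  finally show ?thesis by (simp add: ip_conj[of z])
qed
lemma ip_scale_left: "ip (sc c x) y = cnj c * ip x y"
proof -
  have "ip (sc c x) y = cnj (ip y (sc c x))" by (rule ip_conj)
  also have "\<dots> = cnj c * cnj (ip y x)" by (simp add: ip_scale_right)
  finally show ?thesis by (simp add: ip_conj[of y])
qed
lemma ip_zero_right[simp]: "ip x 0 = 0"
  using ip_add_right[of x 0 0] by simp
lemma ip_zero_left[simp]: "ip 0 x = 0"
  using ip_add_left[of 0 0 x] by simp
lemma ip_minus_right: "ip x (- y) = - ip x y"
  using ip_add_right[of x y "-y"] by (simp add: eq_neg_iff_add_eq_0 add.commute)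
lemma ip_minus_left: "ip (- x) y = - ip x y"
  using ip_add_left[of x "-x" y] by (simp add: eq_neg_iff_add_eq_0 add.commute)
lemma ip_diff_right: "ip x (y - z) = ip x y - ip x z"
  unfolding diff_conv_add_uminus ip_add_right ip_minus_right by simp
lemma ip_diff_left: "ip (x - y) z = ip x z - ip y z"
  unfolding diff_conv_add_uminus ip_add_left ip_minus_left by simp

lemma ip_self_real: "ip x x = complex_of_real (Re (ip x x))"
proof -
  have "Im (ip x x) = 0" using ip_conj[of x x] by (metis cnj.simps(2) complex.sel(2) neg_equal_zero)
  then show ?thesis by (simp add: complex_eq_iff)
qed

lemma nrm_sq: "(nrm x)\<^sup>2 = Re (ip x x)"
  by (simp add: hnorm_def ip_pos)
lemma nrm_nonneg[simp]: "0 \<le> nrm x"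
  by (simp add: hnorm_def ip_pos)
lemma ip_self_nrm: "ip x x = complex_of_real ((nrm x)\<^sup>2)"
  using ip_self_real nrm_sq by simp
lemma nrm_zero_iff[simp]: "nrm x = 0 \<longleftrightarrow> x = 0"
proof
  assume "nrm x = 0" then have "ip x x = 0" using ip_self_nrm by simp
  then show "x = 0" by (rule ip_def0)
qed (simp add: hnorm_def)
lemma nrm_zero[simp]: "nrm 0 = 0" by simp

lemma nrm_scale: "nrm (sc c x) = cmod c * nrm x"
proof -
  have "ip (sc c x) (sc c x) = (cnj c * c) * ip x x"
    by (simp add: ip_scale_left ip_scale_right)
  moreover have "cnj c * c = complex_of_real ((cmod c)\<^sup>2)"
    by (subst complex_norm_square) (rule mult.commute)
  ultimately have "Re (ip (sc c x) (sc c x)) = (cmod c)\<^sup>2 * Re (ip x x)"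
    by simp
  then show ?thesis unfolding hnorm_def by (simp add: real_sqrt_mult)
qed
lemma nrm_minus: "nrm (- x) = nrm x"
  using nrm_scale[of "-1" x] by simp
lemma nrm_commute: "nrm (x - y) = nrm (y - x)"
  by (metis minus_diff_eq nrm_minus)

lemma nrm_sum_sq: "(nrm (x + y))\<^sup>2 = (nrm x)\<^sup>2 + (nrm y)\<^sup>2 + 2 * Re (ip x y)"
proof -
  have "ip (x+y) (x+y) = ip x x + ip y y + (ip x y + cnj (ip x y))"
    by (simp add: ip_add_left ip_add_right ip_conj[of x y])
  then show ?thesis by (simp add: nrm_sq)
qed
lemma nrm_diff_sq: "(nrm (x - y))\<^sup>2 = (nrm x)\<^sup>2 + (nrm y)\<^sup>2 - 2 * Re (ip x y)"
  using nrm_sum_sq[of x "-y"] by (simp add: nrm_minus ip_minus_right)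

lemma cauchy_schwarz: "cmod (ip x y) \<le> nrm x * nrm y"
proof (cases "y = 0")
  case True then show ?thesis by simp
next
  case False
  define Y where "Y = (nrm y)\<^sup>2"
  have Ypos: "Y > 0" using False by (simp add: Y_def)
  define p where "p = ip y x"
  define t where "t = p / complex_of_real Y"
  have exp: "ip (x - sc t y) (x - sc t y) = ip x x - t * ip x y - cnj t * ip y x + cnj t * t * ip y y"
    by (simp add: ip_diff_left ip_diff_right ip_scale_left ip_scale_right algebra_simps)
  have pc: "p * cnj p = complex_of_real ((cmod p)\<^sup>2)"
    by (rule complex_norm_square[symmetric])
  have e1: "t * cnj p = complex_of_real ((cmod p)\<^sup>2 / Y)"
    unfolding t_def by (simp add: pc)
  have e2: "cnj t * p = complex_of_real ((cmod p)\<^sup>2 / Y)"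
    unfolding t_def by (simp add: pc mult.commute)
  have e3: "cnj t * t * complex_of_real Y = complex_of_real ((cmod p)\<^sup>2 / Y)"
  proof -
    have "cnj t * t * complex_of_real Y = (p * cnj p) / complex_of_real Y"
      using Ypos unfolding t_def by (simp add: power2_eq_square)
    also have "\<dots> = complex_of_real ((cmod p)\<^sup>2 / Y)"
      by (simp add: pc)
    finally show ?thesis .
  qed
  have i1: "ip x y = cnj p" by (simp add: p_def ip_conj[of x y])
  have i2: "ip y y = complex_of_real Y" by (simp add: Y_def ip_self_nrm)
  have "ip (x - sc t y) (x - sc t y) = complex_of_real ((nrm x)\<^sup>2 - (cmod p)\<^sup>2 / Y)"
    unfolding exp i1 i2 e3 p_def[symmetric] e1 e2 ip_self_nrm[of x] by simp
  then have "0 \<le> (nrm x)\<^sup>2 - (cmod p)\<^sup>2 / Y"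
    using ip_pos[of "x - sc t y"] by simp
  then have "(cmod p)\<^sup>2 / Y \<le> (nrm x)\<^sup>2" by simp
  then have "(cmod p)\<^sup>2 \<le> (nrm x)\<^sup>2 * Y" using Ypos by (simp add: pos_divide_le_eq)
  then have "(cmod p)\<^sup>2 \<le> (nrm x * nrm y)\<^sup>2" by (simp add: Y_def power_mult_distrib)
  then have "cmod p \<le> nrm x * nrm y"
    by (rule power2_le_imp_le) simp
  moreover have "cmod (ip x y) = cmod p" by (simp add: i1)
  ultimately show ?thesis by simp
qed

end


lemma sq0: "(\<And>n. 0 \<le> u n) \<Longrightarrow> (\<And>n. u n \<le> v n) \<Longrightarrow> v \<longlonglongrightarrow> 0 \<Longrightarrow> u \<longlonglongrightarrow> (0::real)"
  by (rule real_tendsto_sandwich[of "\<lambda>_. 0" u sequentially v]) auto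

context hsp
begin

lemma nrm_triangle: "nrm (x + y) \<le> nrm x + nrm y"
proof -
  have "Re (ip x y) \<le> nrm x * nrm y"
    using complex_Re_le_cmod[of "ip x y"] cauchy_schwarz[of x y] by linarith
  then have "(nrm (x + y))\<^sup>2 \<le> (nrm x + nrm y)\<^sup>2"
    unfolding nrm_sum_sq by (simp add: power2_sum)
  then show ?thesis by (rule power2_le_imp_le) simp
qed

lemma nrm_tri_diff: "nrm (x - z) \<le> nrm (x - y) + nrm (y - z)"
  using nrm_triangle[of "x - y" "y - z"] by simp

lemma nrm_rev_tri: "\<bar>nrm x - nrm y\<bar> \<le> nrm (x - y)"
proof -
  have "nrm x \<le> nrm (x - y) + nrm y" using nrm_triangle[of "x - y" y] by simp
  moreover have "nrm y \<le> nrm (x - y) + nrm x" using nrm_triangle[of "y - x" x] nrm_commute[of x y] by simp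
  ultimately show ?thesis by linarith
qed

definition conv where "conv f l \<longleftrightarrow> (\<lambda>n. nrm (f n - l)) \<longlonglongrightarrow> 0"

lemma conv_const: "conv (\<lambda>n. l) l"
  by (simp add: conv_def)

lemma conv_add: "conv f l \<Longrightarrow> conv g m \<Longrightarrow> conv (\<lambda>n. f n + g n) (l + m)"
  unfolding conv_def
proof (rule sq0)
  fix n
  show "nrm (f n + g n - (l + m)) \<le> nrm (f n - l) + nrm (g n - m)"
    using nrm_triangle[of "f n - l" "g n - m"] by (simp add: algebra_simps)
qed (auto intro: tendsto_add_zero)

lemma conv_scale: "conv f l \<Longrightarrow> conv (\<lambda>n. sc c (f n)) (sc c l)"
  unfolding conv_def
proof -
  assume a: "(\<lambda>n. nrm (f n - l)) \<longlonglongrightarrow> 0"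
  have "(\<lambda>n. nrm (sc c (f n) - sc c l)) = (\<lambda>n. cmod c * nrm (f n - l))"
    by (simp add: vs.scale_right_diff_distrib[symmetric] nrm_scale)
  moreover have "(\<lambda>n. cmod c * nrm (f n - l)) \<longlonglongrightarrow> 0"
    using tendsto_mult_right_zero[OF a] by simp
  ultimately show "(\<lambda>n. nrm (sc c (f n) - sc c l)) \<longlonglongrightarrow> 0" by simp
qed

lemma conv_minus: "conv f l \<Longrightarrow> conv (\<lambda>n. - f n) (- l)"
  using conv_scale[of f l "-1"] by simp

lemma conv_diff: "conv f l \<Longrightarrow> conv g m \<Longrightarrow> conv (\<lambda>n. f n - g n) (l - m)"
  using conv_add[of f l "\<lambda>n. - g n" "- m"] conv_minus[of g m] by simp

lemma conv_nrm: "conv f l \<Longrightarrow> (\<lambda>n. nrm (f n)) \<longlonglongrightarrow> nrm l"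
  unfolding conv_def
proof -
  assume a: "(\<lambda>n. nrm (f n - l)) \<longlonglongrightarrow> 0"
  have "(\<lambda>n. \<bar>nrm (f n) - nrm l\<bar>) \<longlonglongrightarrow> 0"
    by (rule sq0[OF _ nrm_rev_tri a]) simp
  then show "(\<lambda>n. nrm (f n)) \<longlonglongrightarrow> nrm l"
    by (simp add: LIM_zero_iff tendsto_rabs_zero_iff)
qed

lemma conv_ip: "conv f l \<Longrightarrow> conv g m \<Longrightarrow> (\<lambda>n. ip (f n) (g n)) \<longlonglongrightarrow> ip l m"
proof -
  assume f: "conv f l" and g: "conv g m"
  have f0: "(\<lambda>n. nrm (f n - l)) \<longlonglongrightarrow> 0" and g0: "(\<lambda>n. nrm (g n - m)) \<longlonglongrightarrow> 0"
    using f g by (auto simp: conv_def)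
  have "(\<lambda>n. cmod (ip (f n) (g n) - ip l m)) \<longlonglongrightarrow> 0"
  proof (rule sq0)
    fix n
    have "ip (f n) (g n) - ip l m = ip (f n - l) (g n) + ip l (g n - m)"
      by (simp add: ip_diff_left ip_diff_right)
    then have "cmod (ip (f n) (g n) - ip l m) \<le> cmod (ip (f n - l) (g n)) + cmod (ip l (g n - m))"
      by (simp add: norm_triangle_ineq)
    also have "\<dots> \<le> nrm (f n - l) * nrm (g n) + nrm l * nrm (g n - m)"
      by (intro add_mono cauchy_schwarz)
    also have "\<dots> \<le> nrm (f n - l) * (nrm (g n - m) + nrm m) + nrm l * nrm (g n - m)"
      using nrm_triangle[of "g n - m" m] by (intro add_mono mult_left_mono) auto
    finally show "cmod (ip (f n) (g n) - ip l m) \<le> nrm (f n - l) * (nrm (g n - m) + nrm m) + nrm l * nrm (g n - m)" .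
  next
    show "(\<lambda>n. nrm (f n - l) * (nrm (g n - m) + nrm m) + nrm l * nrm (g n - m)) \<longlonglongrightarrow> 0"
      using tendsto_add[OF tendsto_mult[OF f0 tendsto_add[OF g0 tendsto_const]] tendsto_mult[OF tendsto_const g0]]
      by simp
  qed simp
  then show ?thesis
    by (simp add: LIM_zero_iff tendsto_norm_zero_iff)
qed

lemma conv_unique: "conv f l \<Longrightarrow> conv f l' \<Longrightarrow> l = l'"
proof -
  assume "conv f l" "conv f l'"
  then have "conv (\<lambda>n. f n - f n) (l - l')" by (rule conv_diff)
  then have "(\<lambda>n. nrm (l' - l)) \<longlonglongrightarrow> 0" by (simp add: conv_def nrm_minus)
  then have "nrm (l' - l) = 0" by (simp add: LIMSEQ_const_iff)
  then show ?thesis by simp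
qed

lemma conv_cauchy: "conv f l \<Longrightarrow> e > 0 \<Longrightarrow> \<exists>N. \<forall>m\<ge>N. \<forall>n\<ge>N. nrm (f m - f n) < e"
proof -
  assume "conv f l" "e > 0"
  then have "(\<lambda>n. nrm (f n - l)) \<longlonglongrightarrow> 0" by (simp add: conv_def)
  then obtain N where N: "\<forall>n\<ge>N. nrm (f n - l) < e / 2"
    using \<open>e > 0\<close> by (metis (no_types, lifting) LIMSEQ_D diff_zero half_gt_zero nrm_nonneg real_norm_def abs_of_nonneg)
  show ?thesis
  proof (intro exI allI impI)
    fix m n assume "m \<ge> N" "n \<ge> N"
    have "nrm (f m - f n) \<le> nrm (f m - l) + nrm (l - f n)" by (rule nrm_tri_diff)
    also have "\<dots> = nrm (f m - l) + nrm (f n - l)" by (simp add: nrm_commute)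
    also have "\<dots> < e" using N[rule_format, OF \<open>m \<ge> N\<close>] N[rule_format, OF \<open>n \<ge> N\<close>] by linarith
    finally show "nrm (f m - f n) < e" .
  qed
qed

lemma conv_via_bound:
  assumes b: "\<And>m n. nrm (f m - f n) \<le> K * nrm (g m - g n)" and g: "conv g v"
  shows "\<exists>l. conv f l"
proof -
  have "\<forall>e>0. \<exists>N. \<forall>m\<ge>N. \<forall>n\<ge>N. nrm (f m - f n) < e"
  proof (intro allI impI)
    fix e :: real assume e: "e > 0"
    define K' where "K' = \<bar>K\<bar> + 1"
    have K': "K' > 0" by (simp add: K'_def add_pos_nonneg)
    obtain N where N: "\<forall>m\<ge>N. \<forall>n\<ge>N. nrm (g m - g n) < e / K'"
      using conv_cauchy[OF g, of "e / K'"] e K' by auto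
    show "\<exists>N. \<forall>m\<ge>N. \<forall>n\<ge>N. nrm (f m - f n) < e"
    proof (intro exI allI impI)
      fix m n assume "m \<ge> N" "n \<ge> N"
      have "nrm (f m - f n) \<le> K * nrm (g m - g n)" by (rule b)
      also have "\<dots> \<le> K' * nrm (g m - g n)"
        unfolding K'_def by (intro mult_right_mono) auto
      also have "\<dots> < K' * (e / K')"
        using N \<open>m \<ge> N\<close> \<open>n \<ge> N\<close> K' by (intro mult_strict_left_mono) auto
      also have "\<dots> = e" using K' by simp
      finally show "nrm (f m - f n) < e" .
    qed
  qed
  then show ?thesis using complete[of f] by (auto simp: conv_def)
qed

lemma dense_seq:
  assumes "dense_in ip UNIV D"
  shows "\<exists>xs. (\<forall>n. xs n \<in> D) \<and> conv xs v"
proof -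
  have "\<forall>n. \<exists>y. y \<in> D \<and> nrm (v - y) < inverse (real (Suc n))"
  proof
    fix n
    have "inverse (real (Suc n)) > 0" by simp
    then show "\<exists>y. y \<in> D \<and> nrm (v - y) < inverse (real (Suc n))"
      using assms unfolding dense_in_def by blast
  qed
  then obtain xs where xs: "\<forall>n. xs n \<in> D \<and> nrm (v - xs n) < inverse (real (Suc n))"
    using choice[of "\<lambda>n y. y \<in> D \<and> nrm (v - y) < inverse (real (Suc n))"] by blast
  have "conv xs v" unfolding conv_def
  proof (rule sq0)
    fix n show "nrm (xs n - v) \<le> inverse (real (Suc n))"
      using xs nrm_commute[of "xs n" v] by (metis less_imp_le)
  qed (simp_all only: LIMSEQ_inverse_real_of_nat nrm_nonneg)
  then show ?thesis using xs by blast
qed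

lemma dense_zero:
  assumes "dense_in ip UNIV D" and "\<forall>x\<in>D. ip x v = 0"
  shows "v = 0"
proof -
  obtain xs where xs: "\<forall>n. xs n \<in> D" "conv xs v" using dense_seq[OF assms(1)] by blast
  have "(\<lambda>n. ip (xs n) v) \<longlonglongrightarrow> ip v v" by (rule conv_ip[OF xs(2) conv_const])
  moreover have "(\<lambda>n. ip (xs n) v) = (\<lambda>n. 0)" using xs(1) assms(2) by auto
  ultimately have "ip v v = 0" by (simp add: LIMSEQ_const_iff)
  then show ?thesis by (rule ip_def0)
qed

lemma csub_add: "csubspace sc D \<Longrightarrow> x \<in> D \<Longrightarrow> y \<in> D \<Longrightarrow> x + y \<in> D"
  by (simp add: csubspace_def)
lemma csub_scale: "csubspace sc D \<Longrightarrow> x \<in> D \<Longrightarrow> sc c x \<in> D"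
  by (simp add: csubspace_def)
lemma csub_0: "csubspace sc D \<Longrightarrow> 0 \<in> D"
  by (simp add: csubspace_def)
lemma csub_minus: "csubspace sc D \<Longrightarrow> x \<in> D \<Longrightarrow> - x \<in> D"
  using csub_scale[of D x "-1"] by simp
lemma csub_diff: "csubspace sc D \<Longrightarrow> x \<in> D \<Longrightarrow> y \<in> D \<Longrightarrow> x - y \<in> D"
  using csub_add[of D x "-y"] csub_minus[of D y] by simp

lemma lin_csub: "lin_op sc W D T \<Longrightarrow> csubspace sc D"
  by (simp add: lin_op_def)
lemma lin_add: "lin_op sc W D T \<Longrightarrow> x \<in> D \<Longrightarrow> y \<in> D \<Longrightarrow> T (x + y) = T x + T y"
  by (simp add: lin_op_def)
lemma lin_scale: "lin_op sc W D T \<Longrightarrow> x \<in> D \<Longrightarrow> T (sc c x) = sc c (T x)"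
  by (simp add: lin_op_def)
lemma lin_0: "lin_op sc W D T \<Longrightarrow> T 0 = 0"
proof -
  assume l: "lin_op sc W D T"
  have "T (sc 0 0) = sc 0 (T 0)" using l csub_0[OF lin_csub[OF l]] by (rule lin_scale)
  then show ?thesis by simp
qed
lemma lin_minus: "lin_op sc W D T \<Longrightarrow> x \<in> D \<Longrightarrow> T (- x) = - T x"
  using lin_scale[of W D T x "-1"] by simp
lemma lin_diff: "lin_op sc W D T \<Longrightarrow> x \<in> D \<Longrightarrow> y \<in> D \<Longrightarrow> T (x - y) = T x - T y"
  using lin_add[of W D T x "-y"] lin_minus[of W D T y] csub_minus[OF lin_csub] by fastforce

lemma sa_sym: "selfadjoint_op sc UNIV ip D T \<Longrightarrow> x \<in> D \<Longrightarrow> y \<in> D \<Longrightarrow> ip (T x) y = ip x (T y)"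
  by (simp add: selfadjoint_op_def symmetric_op_def)
lemma sa_lin: "selfadjoint_op sc UNIV ip D T \<Longrightarrow> lin_op sc UNIV D T"
  by (simp add: selfadjoint_op_def symmetric_op_def)
lemma sa_dense: "selfadjoint_op sc UNIV ip D T \<Longrightarrow> dense_in ip UNIV D"
  by (simp add: selfadjoint_op_def symmetric_op_def)
lemma sa_adj: "selfadjoint_op sc UNIV ip D T \<Longrightarrow> \<forall>x\<in>D. ip (T x) y = ip x z \<Longrightarrow> y \<in> D"
  unfolding selfadjoint_op_def adj_dom_def by blast

lemma sa_closed:
  assumes sa: "selfadjoint_op sc UNIV ip D T" and f: "\<forall>n. f n \<in> D"
    and cx: "conv f x" and cy: "conv (\<lambda>n. T (f n)) y"
  shows "x \<in> D \<and> T x = y"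
proof -
  have "\<forall>z\<in>D. ip (T z) x = ip z y"
  proof
    fix z assume z: "z \<in> D"
    have "(\<lambda>n. ip (T z) (f n)) \<longlonglongrightarrow> ip (T z) x" by (rule conv_ip[OF conv_const cx])
    moreover have "(\<lambda>n. ip (T z) (f n)) = (\<lambda>n. ip z (T (f n)))"
      using sa_sym[OF sa z] f by auto
    moreover have "(\<lambda>n. ip z (T (f n))) \<longlonglongrightarrow> ip z y" by (rule conv_ip[OF conv_const cy])
    ultimately show "ip (T z) x = ip z y" using LIMSEQ_unique by metis
  qed
  then have xD: "x \<in> D" by (rule sa_adj[OF sa])
  have "\<forall>z\<in>D. ip z (T x - y) = 0"
    using \<open>\<forall>z\<in>D. ip (T z) x = ip z y\<close> sa_sym[OF sa _ xD] by (simp add: ip_diff_right)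
  then have "T x - y = 0" by (rule dense_zero[OF sa_dense[OF sa]])
  then show ?thesis using xD by simp
qed

end


context hsp begin
lemma parallelogram: "(nrm (x - y))\<^sup>2 + (nrm (x + y))\<^sup>2 = 2 * (nrm x)\<^sup>2 + 2 * (nrm y)\<^sup>2"
  unfolding nrm_diff_sq nrm_sum_sq by simp
lemma sc_two: "sc 2 w = w + w"
  using vs.scale_left_distrib[of 1 1 w] by simp
end

locale setting = hsp sc ip for sc :: "complex \<Rightarrow> 'x::ab_group_add \<Rightarrow> 'x" and ip +
  fixes A S B C :: "'x \<Rightarrow> 'x" and DA DS :: "'x set" and eps ba bb cc cd :: real
  assumes A_sa: "selfadjoint_op sc UNIV ip DA A"
    and eps_pos: "0 < eps"
    and A_lower: "\<forall>x\<in>DA. Re (ip x (A x)) \<ge> eps * Re (ip x x)"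
    and S_sa: "selfadjoint_op sc UNIV ip DS S"
    and S_sq_dom: "DA = {x\<in>DS. S x \<in> DS}"
    and S_sq: "\<forall>x\<in>DA. S (S x) = A x"
    and B_lin: "lin_op sc UNIV DS B"
    and a_range: "0 \<le> ba" "ba < 1"
    and B_bound: "\<forall>x\<in>DS. (hnorm ip (B x))\<^sup>2 \<le> ba\<^sup>2 * (hnorm ip (S x))\<^sup>2 + bb\<^sup>2 * (hnorm ip x)\<^sup>2"
    and C_lin: "lin_op sc UNIV DS C"
    and C_bound: "\<forall>x\<in>DS. (hnorm ip (C x))\<^sup>2 \<le> cc\<^sup>2 * (hnorm ip (S x))\<^sup>2 + cd\<^sup>2 * (hnorm ip x)\<^sup>2"
begin

lemma A_lin: "lin_op sc UNIV DA A" by (rule sa_lin[OF A_sa])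
lemma S_lin: "lin_op sc UNIV DS S" by (rule sa_lin[OF S_sa])
lemma DA_csub: "csubspace sc DA" by (rule lin_csub[OF A_lin])
lemma DS_csub: "csubspace sc DS" by (rule lin_csub[OF S_lin])
lemma DA_DS: "x \<in> DA \<Longrightarrow> x \<in> DS" using S_sq_dom by auto
lemma DA_SDS: "x \<in> DA \<Longrightarrow> S x \<in> DS" using S_sq_dom by auto
lemma SS: "x \<in> DA \<Longrightarrow> S (S x) = A x" using S_sq by auto

lemma A_bound: assumes u: "u \<in> DA" shows "eps * nrm u \<le> nrm (A u)"
proof -
  have "eps * (nrm u)\<^sup>2 \<le> Re (ip u (A u))" using A_lower u by (simp add: nrm_sq)
  also have "\<dots> \<le> cmod (ip u (A u))" by (rule complex_Re_le_cmod)
  also have "\<dots> \<le> nrm u * nrm (A u)" by (rule cauchy_schwarz)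
  finally have h: "eps * (nrm u)\<^sup>2 \<le> nrm u * nrm (A u)" .
  show ?thesis
  proof (cases "nrm u = 0")
    case True then show ?thesis by simp
  next
    case False
    then have "nrm u > 0" using nrm_nonneg[of u] by linarith
    moreover have "nrm u * (eps * nrm u) \<le> nrm u * nrm (A u)" using h by (simp add: power2_eq_square mult_ac)
    ultimately show ?thesis by simp
  qed
qed

lemma S_inj: assumes x: "x \<in> DS" and Sx: "S x = 0" shows "x = 0"
proof -
  have xA: "x \<in> DA" using S_sq_dom x Sx csub_0[OF DS_csub] by auto
  have "A x = 0" using SS[OF xA] Sx lin_0[OF S_lin] by simp
  then have "eps * nrm x \<le> 0" using A_bound[OF xA] by simp
  then have "nrm x = 0" using eps_pos nrm_nonneg[of x] by (simp add: mult_le_0_iff)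
  then show ?thesis by simp
qed

lemma S_inj2: "x \<in> DS \<Longrightarrow> y \<in> DS \<Longrightarrow> S x = S y \<Longrightarrow> x = y"
  using S_inj[of "x - y"] lin_diff[OF S_lin] csub_diff[OF DS_csub] by fastforce

lemma A_kernel: assumes r: "\<forall>x\<in>DA. ip (A x) r = 0" shows "r = 0"
proof -
  have rA: "r \<in> DA" using r by (intro sa_adj[OF A_sa, of r 0]) simp
  have "\<forall>x\<in>DA. ip x (A r) = 0" using r sa_sym[OF A_sa _ rA] by simp
  then have "A r = 0" by (rule dense_zero[OF sa_dense[OF A_sa]])
  then have "eps * nrm r \<le> 0" using A_bound[OF rA] by simp
  then have "nrm r = 0" using eps_pos nrm_nonneg[of r] by (simp add: mult_le_0_iff)
  then show ?thesis by simp
qed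

end


context setting begin

lemma variational:
  assumes r: "\<And>z s. z \<in> DA \<Longrightarrow> (nrm r)\<^sup>2 \<le> (nrm (r - sc s (A z)))\<^sup>2"
  shows "\<forall>z\<in>DA. ip (A z) r = 0"
proof
  fix z assume z: "z \<in> DA"
  define y where "y = A z"
  define p where "p = ip y r"
  define Y where "Y = (nrm y)\<^sup>2"
  have Y0: "Y \<ge> 0" by (simp add: Y_def)
  have key: "\<And>t. t > 0 \<Longrightarrow> 2 * t * (cmod p)\<^sup>2 \<le> t\<^sup>2 * (cmod p)\<^sup>2 * Y"
  proof -
    fix t :: real assume t: "t > 0"
    define s where "s = complex_of_real t * p"
    have "(nrm r)\<^sup>2 \<le> (nrm (r - sc s y))\<^sup>2"
      using r[OF z, of s] by (simp add: y_def)
    also have "\<dots> = (nrm r)\<^sup>2 + (nrm (sc s y))\<^sup>2 - 2 * Re (ip r (sc s y))" by (rule nrm_diff_sq)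
    also have "(nrm (sc s y))\<^sup>2 = t\<^sup>2 * (cmod p)\<^sup>2 * Y"
      using t by (simp add: nrm_scale s_def Y_def norm_mult power_mult_distrib)
    also have "ip r (sc s y) = complex_of_real (t * (cmod p)\<^sup>2)"
    proof -
      have "ip r (sc s y) = s * cnj p" by (simp add: ip_scale_right p_def ip_conj[of y r])
      also have "\<dots> = complex_of_real t * (p * cnj p)" by (simp add: s_def)
      also have "\<dots> = complex_of_real t * complex_of_real ((cmod p)\<^sup>2)" by (simp only: complex_norm_square)
      also have "\<dots> = complex_of_real (t * (cmod p)\<^sup>2)" by (simp only: of_real_mult)
      finally show ?thesis .
    qed
    finally show "2 * t * (cmod p)\<^sup>2 \<le> t\<^sup>2 * (cmod p)\<^sup>2 * Y" by simp
  qed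
  define t where "t = 1 / (Y + 1)"
  have t0: "t > 0" using Y0 by (simp add: t_def)
  have tY: "t * Y < 1" using Y0 by (simp add: t_def)
  have "2 * t * (cmod p)\<^sup>2 \<le> t * (cmod p)\<^sup>2 * (t * Y)"
    using key[OF t0] by (simp add: power2_eq_square mult_ac)
  also have "\<dots> \<le> t * (cmod p)\<^sup>2 * 1"
    using tY t0 by (intro mult_left_mono) auto
  finally have "t * (cmod p)\<^sup>2 \<le> 0" by simp
  then have "(cmod p)\<^sup>2 \<le> 0" using t0 by (simp add: mult_le_0_iff)
  then have "p = 0" by simp
  then show "ip (A z) r = 0" by (simp add: p_def y_def)
qed

lemma A_surj: "\<exists>u\<in>DA. A u = w"
proof -
  define R where "R = (\<lambda>u. nrm (w - A u)) ` DA"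
  define \<delta> where "\<delta> = Inf R"
  have R0: "R \<noteq> {}" using csub_0[OF DA_csub] by (auto simp: R_def)
  have Rb: "bdd_below R" unfolding R_def by (rule bdd_belowI[of _ 0]) auto
  have low: "\<And>u. u \<in> DA \<Longrightarrow> \<delta> \<le> nrm (w - A u)"
    unfolding \<delta>_def R_def by (rule cInf_lower) (use Rb R_def in auto)
  have d0: "\<delta> \<ge> 0" unfolding \<delta>_def by (rule cInf_greatest[OF R0]) (auto simp: R_def)
  have "\<forall>n. \<exists>u. u \<in> DA \<and> (nrm (w - A u))\<^sup>2 < \<delta>\<^sup>2 + inverse (real (Suc n))"
  proof
    fix n
    have "\<delta> < sqrt (\<delta>\<^sup>2 + inverse (real (Suc n)))"
      using d0 by (metis add_pos_nonneg inverse_positive_iff_positive less_add_same_cancel1 of_nat_0_less_iff real_sqrt_abs real_sqrt_less_iff zero_less_Suc zero_le_power2 abs_of_nonneg)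
    then obtain q where q: "q \<in> R" "q < sqrt (\<delta>\<^sup>2 + inverse (real (Suc n)))"
      using cInf_lessD[OF R0] unfolding \<delta>_def by blast
    then obtain u where u: "u \<in> DA" "q = nrm (w - A u)" by (auto simp: R_def)
    have "(nrm (w - A u))\<^sup>2 < (sqrt (\<delta>\<^sup>2 + inverse (real (Suc n))))\<^sup>2"
      using q u by (intro power_strict_mono) auto
    also have "\<dots> = \<delta>\<^sup>2 + inverse (real (Suc n))"
      by (simp add: add_nonneg_nonneg)
    finally show "\<exists>u. u \<in> DA \<and> (nrm (w - A u))\<^sup>2 < \<delta>\<^sup>2 + inverse (real (Suc n))" using u by blast
  qed
  then obtain us where us: "\<And>n. us n \<in> DA" "\<And>n. (nrm (w - A (us n)))\<^sup>2 < \<delta>\<^sup>2 + inverse (real (Suc n))"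
    using choice[of "\<lambda>n u. u \<in> DA \<and> (nrm (w - A u))\<^sup>2 < \<delta>\<^sup>2 + inverse (real (Suc n))"] by blast
  have cb: "(nrm (A (us m) - A (us n)))\<^sup>2 \<le> 2 * inverse (real (Suc m)) + 2 * inverse (real (Suc n))" for m n
  proof -
    define a where "a = w - A (us m)"
    define b where "b = w - A (us n)"
    define mid where "mid = sc (1/2) (us m + us n)"
    have midA: "mid \<in> DA" unfolding mid_def using us(1) DA_csub by (intro csub_scale csub_add) auto
    have "A mid = sc (1/2) (A (us m) + A (us n))"
      unfolding mid_def using us(1) DA_csub
      by (simp add: lin_scale[OF A_lin] lin_add[OF A_lin] csub_add)
    then have "sc 2 (w - A mid) = sc 2 w - (A (us m) + A (us n))"
      by (simp add: vs.scale_right_diff_distrib vs.scale_right_distrib)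
    then have abm: "a + b = sc 2 (w - A mid)" unfolding a_def b_def by (simp add: sc_two algebra_simps)
    have "nrm (a + b) = 2 * nrm (w - A mid)" unfolding abm by (simp add: nrm_scale)
    then have "(nrm (a + b))\<^sup>2 \<ge> 4 * \<delta>\<^sup>2"
      using low[OF midA] d0 by (simp add: power_mult_distrib power_mono)
    moreover have "(nrm (a - b))\<^sup>2 + (nrm (a + b))\<^sup>2 = 2 * (nrm a)\<^sup>2 + 2 * (nrm b)\<^sup>2" by (rule parallelogram)
    moreover have "(nrm (a - b))\<^sup>2 = (nrm (A (us m) - A (us n)))\<^sup>2"
      using nrm_commute[of "A (us n)" "A (us m)"] by (simp add: a_def b_def)
    ultimately show ?thesis using us(2)[of m, folded a_def] us(2)[of n, folded b_def] by linarith
  qed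
  have "\<forall>e>0. \<exists>N. \<forall>m\<ge>N. \<forall>n\<ge>N. nrm (A (us m) - A (us n)) < e"
  proof (intro allI impI)
    fix e :: real assume e: "e > 0"
    obtain N where N: "inverse (real (Suc N)) < e\<^sup>2 / 4"
      using reals_Archimedean[of "e\<^sup>2 / 4"] e by auto
    show "\<exists>N. \<forall>m\<ge>N. \<forall>n\<ge>N. nrm (A (us m) - A (us n)) < e"
    proof (intro exI allI impI)
      fix m n assume mn: "m \<ge> N" "n \<ge> N"
      have im: "inverse (real (Suc m)) \<le> inverse (real (Suc N))"
        using mn by (simp add: le_imp_inverse_le)
      have inn: "inverse (real (Suc n)) \<le> inverse (real (Suc N))"
        using mn by (simp add: le_imp_inverse_le)
      have "(nrm (A (us m) - A (us n)))\<^sup>2 < e\<^sup>2"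
        using cb[of m n] im inn N by linarith
      then show "nrm (A (us m) - A (us n)) < e"
        using e by (meson abs_of_nonneg nrm_nonneg power2_less_imp_less less_imp_le)
    qed
  qed
  then obtain v where v: "conv (\<lambda>n. A (us n)) v" using complete[of "\<lambda>n. A (us n)"] by (auto simp: conv_def)
  have "\<exists>u. conv us u"
  proof (rule conv_via_bound[OF _ v, of us "1 / eps"])
    fix m n
    have "eps * nrm (us m - us n) \<le> nrm (A (us m - us n))"
      using us(1) by (intro A_bound csub_diff[OF DA_csub])
    also have "\<dots> = nrm (A (us m) - A (us n))" using us(1) by (simp add: lin_diff[OF A_lin])
    finally show "nrm (us m - us n) \<le> 1 / eps * nrm (A (us m) - A (us n))"
      using eps_pos by (simp add: field_simps)
  qed
  then obtain u where u: "conv us u" by blast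
  have uA: "u \<in> DA" and Au: "A u = v" using sa_closed[OF A_sa _ u v] us(1) by auto
  have lim1: "(\<lambda>n. (nrm (w - A (us n)))\<^sup>2) \<longlonglongrightarrow> (nrm (w - v))\<^sup>2"
    by (intro tendsto_power conv_nrm conv_diff[OF conv_const v])
  have lim2: "(\<lambda>n. \<delta>\<^sup>2 + inverse (real (Suc n))) \<longlonglongrightarrow> \<delta>\<^sup>2"
    using tendsto_add[OF tendsto_const LIMSEQ_inverse_real_of_nat, of "\<delta>\<^sup>2"] by simp
  have "(nrm (w - v))\<^sup>2 \<le> \<delta>\<^sup>2"
    by (rule LIMSEQ_le[OF lim1 lim2]) (use us(2) less_imp_le in auto)
  then have minu: "(nrm (w - A u))\<^sup>2 \<le> (nrm (w - A u'))\<^sup>2" if "u' \<in> DA" for u'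
    using low[OF that] d0 Au by (meson order_trans power_mono)
  define r where "r = w - A u"
  have "\<forall>z\<in>DA. ip (A z) r = 0"
  proof (rule variational)
    fix z s assume z: "z \<in> DA"
    have uz: "u + sc s z \<in> DA" using uA z DA_csub by (intro csub_add csub_scale) auto
    have "A (u + sc s z) = A u + sc s (A z)"
      using uA z DA_csub by (simp add: lin_add[OF A_lin] lin_scale[OF A_lin] csub_scale)
    then have eq: "r - sc s (A z) = w - A (u + sc s z)" by (simp add: r_def algebra_simps)
    show "(nrm r)\<^sup>2 \<le> (nrm (r - sc s (A z)))\<^sup>2" using minu[OF uz] unfolding eq by (simp add: r_def)
  qed
  then have "r = 0" by (rule A_kernel)
  then show ?thesis using uA by (auto simp: r_def)
qed

end


context setting begin

lemma S_lower: assumes x: "x \<in> DS" shows "eps * (nrm x)\<^sup>2 \<le> (nrm (S x))\<^sup>2"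
proof -
  obtain u where u: "u \<in> DA" "A u = x" using A_surj by blast
  have uS: "u \<in> DS" and SuS: "S u \<in> DS" using u DA_DS DA_SDS by auto
  have "ip x x = ip (S x) (S u)"
    using sa_sym[OF S_sa x SuS] SS[OF u(1)] u(2) by simp
  then have h1: "(nrm x)\<^sup>2 \<le> nrm (S x) * nrm (S u)"
    using complex_Re_le_cmod[of "ip (S x) (S u)"] cauchy_schwarz[of "S x" "S u"] by (simp add: nrm_sq)
  have "ip (S u) (S u) = ip u x"
    using sa_sym[OF S_sa uS SuS] SS[OF u(1)] u(2) by simp
  then have h2: "(nrm (S u))\<^sup>2 \<le> nrm u * nrm x"
    using complex_Re_le_cmod[of "ip u x"] cauchy_schwarz[of u x] by (simp add: nrm_sq)
  have h3: "eps * nrm u \<le> nrm x" using A_bound[OF u(1)] u(2) by simp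
  have "eps * (nrm (S u))\<^sup>2 \<le> eps * nrm u * nrm x"
    using h2 eps_pos by (simp add: mult_left_mono mult.assoc)
  also have "\<dots> \<le> (nrm x)\<^sup>2"
    using h3 by (simp add: power2_eq_square mult_right_mono)
  finally have h4: "eps * (nrm (S u))\<^sup>2 \<le> (nrm x)\<^sup>2" .
  have "((nrm x)\<^sup>2)\<^sup>2 \<le> (nrm (S x) * nrm (S u))\<^sup>2"
    using h1 by (intro power_mono) auto
  then have "eps * ((nrm x)\<^sup>2)\<^sup>2 \<le> (nrm (S x))\<^sup>2 * (eps * (nrm (S u))\<^sup>2)"
    using eps_pos by (simp add: power_mult_distrib mult_ac mult_left_mono)
  also have "\<dots> \<le> (nrm (S x))\<^sup>2 * (nrm x)\<^sup>2"
    using h4 by (intro mult_left_mono) auto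
  finally have h5: "(nrm x)\<^sup>2 * (eps * (nrm x)\<^sup>2) \<le> (nrm x)\<^sup>2 * (nrm (S x))\<^sup>2"
    by (simp add: power2_eq_square mult_ac)
  show ?thesis
  proof (cases "nrm x = 0")
    case True then show ?thesis by simp
  next
    case False
    then have "(nrm x)\<^sup>2 > 0" by simp
    then show ?thesis using h5 by simp
  qed
qed

lemma S_onto: assumes g: "g \<in> DS" shows "\<exists>u\<in>DA. S u = g"
proof -
  obtain u where u: "u \<in> DA" "A u = S g" using A_surj by blast
  have "S (S u) = S g" using SS[OF u(1)] u(2) by simp
  then have "S u = g" using S_inj2 DA_SDS[OF u(1)] g by blast
  then show ?thesis using u(1) by blast
qed

end


context setting begin

abbreviation hY where "hY \<equiv> hnorm (ipY ip S)"

lemma hY_eq: "hY \<xi> = sqrt ((nrm (S (fst \<xi>)))\<^sup>2 + (nrm (snd \<xi>))\<^sup>2)"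
  unfolding hnorm_def[of "ipY ip S"] ipY_def by (simp add: nrm_sq)

lemma hY_ge1: "nrm (S (fst \<xi>)) \<le> hY \<xi>"
  unfolding hY_eq by (rule real_le_rsqrt) simp
lemma hY_ge2: "nrm (snd \<xi>) \<le> hY \<xi>"
  unfolding hY_eq by (rule real_le_rsqrt) simp
lemma hY_le: "hY \<xi> \<le> nrm (S (fst \<xi>)) + nrm (snd \<xi>)"
  unfolding hY_eq by (rule real_sqrt_le_iff[THEN iffD2, of _ "(nrm (S (fst \<xi>)) + nrm (snd \<xi>))\<^sup>2", simplified])
    (simp add: power2_sum)

lemma ipY_self_0: "ipY ip S x x = 0 \<Longrightarrow> fst x \<in> DS \<Longrightarrow> x = 0"
proof -
  assume h: "ipY ip S x x = 0" and x: "fst x \<in> DS"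
  have "(nrm (S (fst x)))\<^sup>2 + (nrm (snd x))\<^sup>2 = 0"
    using arg_cong[OF h, of Re] unfolding ipY_def by (simp add: nrm_sq)
  then have "nrm (S (fst x)) = 0" "nrm (snd x) = 0"
    by (simp_all add: add_nonneg_eq_0_iff)
  then have "fst x = 0" "snd x = 0" using S_inj[OF x] by auto
  then show "x = 0" by (simp add: prod_eq_iff)
qed

lemma Y_vs: "vector_space (scaleY sc)"
  by unfold_locales (auto simp: scaleY_def vs.scale_right_distrib vs.scale_left_distrib)

lemma Y_csub: "csubspace (scaleY sc) (DS \<times> UNIV)"
  unfolding csubspace_def scaleY_def
  using DS_csub by (auto simp: zero_prod_def intro: csub_add csub_scale csub_0)

lemma Y_complete:
  assumes f: "\<forall>n. f n \<in> DS \<times> UNIV"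
    and c: "\<forall>e>0. \<exists>N. \<forall>m\<ge>N. \<forall>n\<ge>N. hY (f m - f n) < e"
  shows "\<exists>l\<in>DS \<times> UNIV. (\<lambda>n. hY (f n - l)) \<longlonglongrightarrow> 0"
proof -
  define g where "g n = fst (f n)" for n
  define h where "h n = snd (f n)" for n
  have gD: "g n \<in> DS" for n using f by (auto simp: g_def mem_Times_iff)
  have Sdiff: "S (g m) - S (g n) = S (fst (f m - f n))" for m n
    using gD by (simp add: g_def lin_diff[OF S_lin])
  have cS: "\<forall>e>0. \<exists>N. \<forall>m\<ge>N. \<forall>n\<ge>N. nrm (S (g m) - S (g n)) < e"
    using c unfolding Sdiff by (meson hY_ge1 le_less_trans)
  have ch: "\<forall>e>0. \<exists>N. \<forall>m\<ge>N. \<forall>n\<ge>N. nrm (h m - h n) < e"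
    using c unfolding h_def by (metis hY_ge2 le_less_trans snd_diff)
  obtain s where s: "conv (\<lambda>n. S (g n)) s" using complete[OF cS] by (auto simp: conv_def)
  obtain l2 where l2: "conv h l2" using complete[OF ch] by (auto simp: conv_def)
  have "\<exists>l1. conv g l1"
  proof (rule conv_via_bound[OF _ s, of g "1 / sqrt eps"])
    fix m n
    have gm: "g m - g n \<in> DS" using gD by (intro csub_diff[OF DS_csub])
    have "sqrt eps * nrm (g m - g n) = sqrt (eps * (nrm (g m - g n))\<^sup>2)"
      using eps_pos by (simp add: real_sqrt_mult)
    also have "\<dots> \<le> sqrt ((nrm (S (g m - g n)))\<^sup>2)" using S_lower[OF gm] by (rule real_sqrt_le_mono)
    also have "\<dots> = nrm (S (g m) - S (g n))" using gD by (simp add: lin_diff[OF S_lin])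
    finally show "nrm (g m - g n) \<le> 1 / sqrt eps * nrm (S (g m) - S (g n))"
      using eps_pos by (simp add: field_simps)
  qed
  then obtain l1 where l1: "conv g l1" by blast
  have l1D: "l1 \<in> DS" and Sl1: "S l1 = s" using sa_closed[OF S_sa _ l1 s] gD by auto
  show ?thesis
  proof (intro bexI)
    show "(l1, l2) \<in> DS \<times> UNIV" using l1D by simp
    show "(\<lambda>n. hY (f n - (l1, l2))) \<longlonglongrightarrow> 0"
    proof (rule sq0)
      fix n
      have "hY (f n - (l1, l2)) \<le> nrm (S (g n - l1)) + nrm (h n - l2)"
        using hY_le[of "f n - (l1, l2)"] by (simp add: g_def h_def)
      also have "\<dots> = nrm (S (g n) - s) + nrm (h n - l2)"
        using gD l1D Sl1 by (simp add: lin_diff[OF S_lin])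
      finally show "hY (f n - (l1, l2)) \<le> nrm (S (g n) - s) + nrm (h n - l2)" .
    next
      show "(\<lambda>n. nrm (S (g n) - s) + nrm (h n - l2)) \<longlonglongrightarrow> 0"
        using s l2 unfolding conv_def by (simp add: tendsto_add_zero)
    qed (simp add: hY_eq)
  qed
qed

lemma Y_hilbert: "hilbert_space (scaleY sc) (DS \<times> UNIV) (ipY ip S)"
  unfolding hilbert_space_def
proof (intro conjI ballI allI impI)
  show "vector_space (scaleY sc)" by (rule Y_vs)
  show "csubspace (scaleY sc) (DS \<times> UNIV)" by (rule Y_csub)
next
  fix x y z :: "'x \<times> 'x" assume "x \<in> DS \<times> UNIV" "y \<in> DS \<times> UNIV" "z \<in> DS \<times> UNIV"
  then show "ipY ip S x (y + z) = ipY ip S x y + ipY ip S x z"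
    by (auto simp: ipY_def lin_add[OF S_lin] ip_add_right mem_Times_iff)
next
  fix x y :: "'x \<times> 'x" and c assume "x \<in> DS \<times> UNIV" "y \<in> DS \<times> UNIV"
  then show "ipY ip S x (scaleY sc c y) = c * ipY ip S x y"
    by (auto simp: ipY_def scaleY_def lin_scale[OF S_lin] ip_scale_right mem_Times_iff algebra_simps)
next
  fix x y :: "'x \<times> 'x" assume "x \<in> DS \<times> UNIV" "y \<in> DS \<times> UNIV"
  show "ipY ip S y x = cnj (ipY ip S x y)"
    unfolding ipY_def using ip_conj[of "S (fst x)" "S (fst y)"] ip_conj[of "snd x" "snd y"] by simp
next
  fix x :: "'x \<times> 'x" show "0 \<le> Re (ipY ip S x x)" unfolding ipY_def using ip_pos by (simp add: add_nonneg_nonneg)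
next
  fix x :: "'x \<times> 'x" assume "x \<in> DS \<times> UNIV" "ipY ip S x x = 0"
  then show "x = 0" using ipY_self_0 by (auto simp: mem_Times_iff)
next
  fix f :: "nat \<Rightarrow> 'x \<times> 'x"
  assume "(\<forall>n. f n \<in> DS \<times> UNIV) \<and> (\<forall>e>0. \<exists>N. \<forall>m\<ge>N. \<forall>n\<ge>N. hY (f m - f n) < e)"
  then show "\<exists>l\<in>DS \<times> UNIV. (\<lambda>n. hY (f n - l)) \<longlonglongrightarrow> 0" using Y_complete by blast
qed

end


context setting begin

definition HB where "HB B' \<xi> = opH sc A \<xi> + opBhat B' \<xi>"

lemma HB_simp: "HB B' (x1, x2) = (sc (- \<i>) x2, sc \<i> (A x1) - B' x2)"
  by (simp add: HB_def opH_def opBhat_def)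

lemma sc_i_inv: "sc \<i> (sc (- \<i>) v) = v" "sc (- \<i>) (sc \<i> v) = v"
  by simp_all

lemma S_msc: "x \<in> DS \<Longrightarrow> S (- sc c x) = - sc c (S x)"
  using lin_minus[OF S_lin csub_scale[OF DS_csub]] lin_scale[OF S_lin] by simp

lemma Y_dense: "dense_in (ipY ip S) (DS \<times> UNIV) (DA \<times> DS)"
  unfolding dense_in_def
proof (intro conjI ballI allI impI)
  show "DA \<times> DS \<subseteq> DS \<times> UNIV" using DA_DS by auto
next
  fix x :: "'x \<times> 'x" and e :: real assume x: "x \<in> DS \<times> UNIV" and e: "e > 0"
  obtain x1 x2 where xx: "x = (x1, x2)" by (cases x)
  have x1: "x1 \<in> DS" using x xx by auto
  have e2: "e / 2 > 0" using e by simp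
  obtain g where g: "g \<in> DS" "nrm (S x1 - g) < e / 2"
    using sa_dense[OF S_sa] e2 unfolding dense_in_def by blast
  obtain u where u: "u \<in> DA" "S u = g" using S_onto[OF g(1)] by blast
  obtain y2 where y2: "y2 \<in> DS" "nrm (x2 - y2) < e / 2"
    using sa_dense[OF S_sa] e2 unfolding dense_in_def by blast
  have "hY (x - (u, y2)) \<le> nrm (S (x1 - u)) + nrm (x2 - y2)"
    using hY_le[of "x - (u, y2)"] by (simp add: xx)
  also have "nrm (S (x1 - u)) = nrm (S x1 - g)"
    using x1 u DA_DS by (simp add: lin_diff[OF S_lin])
  finally have "hY (x - (u, y2)) < e" using g(2) y2(2) by linarith
  moreover have "(u, y2) \<in> DA \<times> DS" using u y2 by simp
  ultimately show "\<exists>y\<in>DA \<times> DS. hY (x - y) < e" by blast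
qed

lemma HB_lin: assumes Bl: "lin_op sc UNIV DS B'"
  shows "lin_op (scaleY sc) (DS \<times> UNIV) (DA \<times> DS) (HB B')"
  unfolding lin_op_def
proof (intro conjI ballI allI)
  show "csubspace (scaleY sc) (DA \<times> DS)"
    unfolding csubspace_def scaleY_def
    using DS_csub DA_csub by (auto simp: zero_prod_def intro: csub_add csub_scale csub_0)
  show "DA \<times> DS \<subseteq> DS \<times> UNIV" using DA_DS by auto
  show "HB B' ` (DA \<times> DS) \<subseteq> DS \<times> UNIV"
    using DS_csub by (auto simp: HB_simp intro!: csub_scale csub_minus)
next
  fix x y :: "'x \<times> 'x" assume x: "x \<in> DA \<times> DS" and y: "y \<in> DA \<times> DS"
  obtain x1 x2 where xx: "x = (x1, x2)" by (cases x)
  obtain y1 y2 where yy: "y = (y1, y2)" by (cases y)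
  show "HB B' (x + y) = HB B' x + HB B' y"
    using x y by (simp add: xx yy HB_simp lin_add[OF A_lin] lin_add[OF Bl] vs.scale_right_distrib)
next
  fix c and x :: "'x \<times> 'x" assume x: "x \<in> DA \<times> DS"
  obtain x1 x2 where xx: "x = (x1, x2)" by (cases x)
  show "HB B' (scaleY sc c x) = scaleY sc c (HB B' x)"
    using x by (simp add: xx HB_simp scaleY_def lin_scale[OF A_lin] lin_scale[OF Bl]
        vs.scale_right_diff_distrib mult.commute)
qed

lemma HB_sym: assumes Bs: "\<forall>x\<in>DS. \<forall>y\<in>DS. ip (B' x) y = ip x (B' y)"
  and x: "x \<in> DA \<times> DS" and y: "y \<in> DA \<times> DS"
  shows "ipY ip S (HB B' x) y = ipY ip S x (HB B' y)"
proof -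
  obtain x1 x2 where xx: "x = (x1, x2)" by (cases x)
  obtain y1 y2 where yy: "y = (y1, y2)" by (cases y)
  have h: "x1 \<in> DA" "x2 \<in> DS" "y1 \<in> DA" "y2 \<in> DS" using x y xx yy by auto
  have e1: "ip (S x2) (S y1) = ip x2 (A y1)"
    using sa_sym[OF S_sa h(2) DA_SDS[OF h(3)]] SS[OF h(3)] by simp
  have e2: "ip (A x1) y2 = ip (S x1) (S y2)"
    using sa_sym[OF S_sa DA_SDS[OF h(1)] h(4)] SS[OF h(1)] by simp
  have e3: "ip (B' x2) y2 = ip x2 (B' y2)" using Bs h by blast
  show ?thesis
    using h by (simp add: xx yy HB_simp ipY_def S_msc ip_scale_left ip_scale_right
        ip_diff_left ip_diff_right ip_minus_left ip_minus_right e1 e2 e3)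
qed

end


lemma lin_op_img: "lin_op sc' W D T \<Longrightarrow> x \<in> D \<Longrightarrow> T x \<in> W"
  unfolding lin_op_def by blast

context setting begin

lemma HB_adj: assumes Bsym: "symmetric_op sc UNIV ip DS B'"
  shows "adj_dom (DS \<times> UNIV) (ipY ip S) (DA \<times> DS) (HB B') = DA \<times> DS"
proof
  have Bl: "lin_op sc UNIV DS B'" and Bs: "\<forall>x\<in>DS. \<forall>y\<in>DS. ip (B' x) y = ip x (B' y)"
    using Bsym by (auto simp: symmetric_op_def)
  show "DA \<times> DS \<subseteq> adj_dom (DS \<times> UNIV) (ipY ip S) (DA \<times> DS) (HB B')"
  proof
    fix y :: "'x \<times> 'x" assume y: "y \<in> DA \<times> DS"
    have "HB B' y \<in> DS \<times> UNIV" using HB_lin[OF Bl] y by (rule lin_op_img)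
    moreover have "y \<in> DS \<times> UNIV" using y DA_DS by auto
    ultimately show "y \<in> adj_dom (DS \<times> UNIV) (ipY ip S) (DA \<times> DS) (HB B')"
      unfolding adj_dom_def using HB_sym[OF Bs _ y] by (intro CollectI conjI bexI[of _ "HB B' y"]) auto
  qed
  show "adj_dom (DS \<times> UNIV) (ipY ip S) (DA \<times> DS) (HB B') \<subseteq> DA \<times> DS"
  proof
    fix y :: "'x \<times> 'x" assume "y \<in> adj_dom (DS \<times> UNIV) (ipY ip S) (DA \<times> DS) (HB B')"
    then obtain z where y: "y \<in> DS \<times> UNIV" and z: "z \<in> DS \<times> UNIV"
      and yz: "\<And>x. x \<in> DA \<times> DS \<Longrightarrow> ipY ip S (HB B' x) y = ipY ip S x z"
      unfolding adj_dom_def by blast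
    obtain y1 y2 where yy: "y = (y1, y2)" by (cases y)
    obtain z1 z2 where zz: "z = (z1, z2)" by (cases z)
    have y1: "y1 \<in> DS" and z1: "z1 \<in> DS" using y z yy zz by auto
    have B0: "B' 0 = 0" by (rule lin_0[OF Bl])
    have A0: "A 0 = 0" by (rule lin_0[OF A_lin])
    have S0: "S 0 = 0" by (rule lin_0[OF S_lin])
    have "\<forall>x\<in>DA. ip (A x) (sc (- \<i>) y2 - z1) = 0"
    proof
      fix x1 assume x1: "x1 \<in> DA"
      have "(x1, 0) \<in> DA \<times> DS" using x1 csub_0[OF DS_csub] by simp
      from yz[OF this, unfolded yy zz] have "- \<i> * ip (A x1) y2 = ip (S x1) (S z1)"
        by (simp add: HB_simp ipY_def B0 S0 ip_scale_left)
      moreover have "ip (S x1) (S z1) = ip (A x1) z1"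
        using sa_sym[OF S_sa DA_SDS[OF x1] z1] SS[OF x1] by simp
      ultimately show "ip (A x1) (sc (- \<i>) y2 - z1) = 0"
        by (simp add: ip_diff_right ip_scale_right ip_minus_right)
    qed
    then have "sc (- \<i>) y2 - z1 = 0" by (rule A_kernel)
    then have "sc (- \<i>) y2 = z1" by simp
    then have "y2 = sc \<i> z1" using sc_i_inv(1)[of y2] by simp
    then have y2: "y2 \<in> DS" using z1 csub_scale[OF DS_csub] by simp
    have "\<forall>x\<in>DS. ip (S x) (sc \<i> (S y1)) = ip x (z2 + B' y2)"
    proof
      fix x2 assume x2: "x2 \<in> DS"
      have "(0, x2) \<in> DA \<times> DS" using x2 csub_0[OF DA_csub] by simp
      from yz[OF this, unfolded yy zz] have "\<i> * ip (S x2) (S y1) - ip (B' x2) y2 = ip x2 z2"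
        by (simp add: HB_simp ipY_def A0 S0 S_msc[OF x2] ip_scale_left ip_minus_left ip_diff_left)
      moreover have "ip (B' x2) y2 = ip x2 (B' y2)" using Bs x2 y2 by blast
      ultimately show "ip (S x2) (sc \<i> (S y1)) = ip x2 (z2 + B' y2)"
        by (simp add: ip_scale_right ip_add_right algebra_simps)
    qed
    then have "sc \<i> (S y1) \<in> DS" by (rule sa_adj[OF S_sa])
    then have "S y1 \<in> DS" using csub_scale[OF DS_csub, of "sc \<i> (S y1)" "- \<i>"] by simp
    then have "y1 \<in> DA" using S_sq_dom y1 by simp
    then show "y \<in> DA \<times> DS" using yy y2 by simp
  qed
qed

lemma HB_sa: assumes Bsym: "symmetric_op sc UNIV ip DS B'"
  shows "selfadjoint_op (scaleY sc) (DS \<times> UNIV) (ipY ip S) (DA \<times> DS) (HB B')"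
proof -
  have Bl: "lin_op sc UNIV DS B'" and Bs: "\<forall>x\<in>DS. \<forall>y\<in>DS. ip (B' x) y = ip x (B' y)"
    using Bsym by (auto simp: symmetric_op_def)
  show ?thesis
    unfolding selfadjoint_op_def symmetric_op_def
    using HB_lin[OF Bl] Y_dense HB_sym[OF Bs] HB_adj[OF Bsym] by blast
qed

lemma zero_sym: "symmetric_op sc UNIV ip DS (\<lambda>_. 0)"
  unfolding symmetric_op_def lin_op_def
  using DS_csub sa_dense[OF S_sa] by simp

lemma H_eq: "opH sc A = HB (\<lambda>_. 0)"
  by (rule ext) (simp add: HB_def opBhat_def zero_prod_def)

end


context setting begin

lemma B_cont: assumes f: "\<And>n. f n \<in> DS" and x: "x \<in> DS"
  and c1: "conv f x" and c2: "conv (\<lambda>n. S (f n)) (S x)"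
  shows "conv (\<lambda>n. B (f n)) (B x)"
  unfolding conv_def
proof (rule sq0)
  fix n
  have d: "f n - x \<in> DS" using f x by (rule csub_diff[OF DS_csub])
  have "(nrm (B (f n) - B x))\<^sup>2 = (nrm (B (f n - x)))\<^sup>2" using f x by (simp add: lin_diff[OF B_lin])
  also have "\<dots> \<le> ba\<^sup>2 * (nrm (S (f n - x)))\<^sup>2 + bb\<^sup>2 * (nrm (f n - x))\<^sup>2" using B_bound d by blast
  also have "\<dots> \<le> (\<bar>ba\<bar> * nrm (S (f n) - S x) + \<bar>bb\<bar> * nrm (f n - x))\<^sup>2"
    using f x by (simp add: lin_diff[OF S_lin] power2_sum power_mult_distrib)
  finally show "nrm (B (f n) - B x) \<le> \<bar>ba\<bar> * nrm (S (f n) - S x) + \<bar>bb\<bar> * nrm (f n - x)"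
    by (rule power2_le_imp_le) simp
next
  show "(\<lambda>n. \<bar>ba\<bar> * nrm (S (f n) - S x) + \<bar>bb\<bar> * nrm (f n - x)) \<longlonglongrightarrow> 0"
    using c1 c2 unfolding conv_def by (intro tendsto_add_zero tendsto_mult_right_zero)
qed simp

lemma comp_conv:
  assumes f: "\<And>n. fst (f n) \<in> DS" and x: "fst x \<in> DS" and c: "(\<lambda>n. hY (f n - x)) \<longlonglongrightarrow> 0"
  shows "conv (\<lambda>n. S (fst (f n))) (S (fst x))" "conv (\<lambda>n. snd (f n)) (snd x)"
proof -
  show "conv (\<lambda>n. S (fst (f n))) (S (fst x))"
    unfolding conv_def
  proof (rule sq0[OF _ _ c])
    fix n show "nrm (S (fst (f n)) - S (fst x)) \<le> hY (f n - x)"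
      using hY_ge1[of "f n - x"] f x by (simp add: lin_diff[OF S_lin])
  qed simp
  show "conv (\<lambda>n. snd (f n)) (snd x)"
    unfolding conv_def
  proof (rule sq0[OF _ _ c])
    fix n show "nrm (snd (f n) - snd x) \<le> hY (f n - x)"
      using hY_ge2[of "f n - x"] by simp
  qed simp
qed

lemma HB_closed: "closed_op (ipY ip S) (DS \<times> UNIV) (DA \<times> DS) (HB B)"
  unfolding closed_op_def
proof (intro allI impI)
  fix f and x y :: "'x \<times> 'x"
  assume "(\<forall>n. f n \<in> DA \<times> DS) \<and> x \<in> DS \<times> UNIV \<and> y \<in> DS \<times> UNIV \<and>
        (\<lambda>n. hY (f n - x)) \<longlonglongrightarrow> 0 \<and> (\<lambda>n. hY (HB B (f n) - y)) \<longlonglongrightarrow> 0"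
  then have f: "\<And>n. f n \<in> DA \<times> DS" and x: "x \<in> DS \<times> UNIV" and y: "y \<in> DS \<times> UNIV"
    and cx: "(\<lambda>n. hY (f n - x)) \<longlonglongrightarrow> 0" and cy: "(\<lambda>n. hY (HB B (f n) - y)) \<longlonglongrightarrow> 0"
    by auto
  define f1 where "f1 = (\<lambda>n. fst (f n))"
  define f2 where "f2 = (\<lambda>n. snd (f n))"
  obtain x1 x2 where xx: "x = (x1, x2)" by (cases x)
  obtain y1 y2 where yy: "y = (y1, y2)" by (cases y)
  have f1A: "f1 n \<in> DA" and f2S: "f2 n \<in> DS" for n using f by (auto simp: f1_def f2_def mem_Times_iff)
  have f1S: "f1 n \<in> DS" for n using f1A DA_DS by blast
  have x1: "x1 \<in> DS" and y1: "y1 \<in> DS" using x y xx yy by auto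
  have HBf: "HB B (f n) = (- sc \<i> (f2 n), sc \<i> (A (f1 n)) - B (f2 n))" for n
    using HB_simp[of B "f1 n" "f2 n"] by (simp add: f1_def f2_def)
  have c1: "conv (\<lambda>n. S (f1 n)) (S x1)" and c2: "conv f2 x2"
    using comp_conv[of f x, OF _ _ cx] f1S x1 by (auto simp: f1_def f2_def xx)
  have fstHB: "fst (HB B (f n)) \<in> DS" for n
    using HBf f2S csub_minus[OF DS_csub] csub_scale[OF DS_csub] by simp
  have c3': "conv (\<lambda>n. S (fst (HB B (f n)))) (S y1)" and c4: "conv (\<lambda>n. sc \<i> (A (f1 n)) - B (f2 n)) y2"
    using comp_conv[of "\<lambda>n. HB B (f n)" y, OF fstHB _ cy] y1 by (auto simp: yy HBf)
  have "conv (\<lambda>n. - sc \<i> (S (f2 n))) (S y1)"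
    using c3' f2S by (simp add: HBf S_msc)
  from conv_scale[OF this, of \<i>] have c3: "conv (\<lambda>n. S (f2 n)) (sc \<i> (S y1))" by simp
  have x2: "x2 \<in> DS" and Sx2: "S x2 = sc \<i> (S y1)" using sa_closed[OF S_sa _ c2 c3] f2S by auto
  have cB: "conv (\<lambda>n. B (f2 n)) (B x2)"
    using B_cont[OF f2S x2 c2] c3 Sx2 by simp
  from conv_add[OF c4 cB] have "conv (\<lambda>n. sc \<i> (A (f1 n))) (y2 + B x2)" by simp
  from conv_scale[OF this, of "- \<i>"] have c5: "conv (\<lambda>n. A (f1 n)) (- sc \<i> (y2 + B x2))" by simp
  have "\<exists>u. conv f1 u"
  proof (rule conv_via_bound[OF _ c5, of f1 "1 / eps"])
    fix m n
    have "eps * nrm (f1 m - f1 n) \<le> nrm (A (f1 m - f1 n))"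
      using f1A by (intro A_bound csub_diff[OF DA_csub])
    also have "\<dots> = nrm (A (f1 m) - A (f1 n))" using f1A by (simp add: lin_diff[OF A_lin])
    finally show "nrm (f1 m - f1 n) \<le> 1 / eps * nrm (A (f1 m) - A (f1 n))"
      using eps_pos by (simp add: field_simps)
  qed
  then obtain u where u: "conv f1 u" by blast
  have uA: "u \<in> DA" and Au: "A u = - sc \<i> (y2 + B x2)" using sa_closed[OF A_sa _ u c5] f1A by auto
  have "S u = S x1" using sa_closed[OF S_sa _ u c1] f1S by auto
  then have ux: "u = x1" using S_inj2 DA_DS[OF uA] x1 by blast
  have "S (- sc \<i> x2) = S y1" using S_msc[OF x2] Sx2 by simp
  then have y1eq: "- sc \<i> x2 = y1"
    using S_inj2 csub_minus[OF DS_csub csub_scale[OF DS_csub x2]] y1 by blast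
  show "x \<in> DA \<times> DS \<and> HB B x = y"
    using uA ux x2 y1eq Au by (simp add: xx yy HB_simp)
qed

end


context setting begin

lemma hY_Bhat: "hY (opBhat B' \<xi>) = nrm (B' (snd \<xi>))"
  using lin_0[OF S_lin] by (simp add: hY_eq opBhat_def nrm_minus)

lemma hY_V: "hY (opV sc C \<xi>) = nrm (C (fst \<xi>))"
  using lin_0[OF S_lin] by (simp add: hY_eq opV_def nrm_scale)

lemma Bhat_lin: "lin_op (scaleY sc) (DS \<times> UNIV) (DA \<times> DS) (opBhat B)"
  unfolding lin_op_def
proof (intro conjI ballI allI)
  show "csubspace (scaleY sc) (DA \<times> DS)"
    unfolding csubspace_def scaleY_def
    using DS_csub DA_csub by (auto simp: zero_prod_def intro: csub_add csub_scale csub_0)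
  show "DA \<times> DS \<subseteq> DS \<times> UNIV" using DA_DS by auto
  show "opBhat B ` (DA \<times> DS) \<subseteq> DS \<times> UNIV"
    using csub_0[OF DS_csub] by (auto simp: opBhat_def)
next
  fix x y :: "'x \<times> 'x" assume x: "x \<in> DA \<times> DS" and y: "y \<in> DA \<times> DS"
  then show "opBhat B (x + y) = opBhat B x + opBhat B y"
    by (auto simp: opBhat_def lin_add[OF B_lin] mem_Times_iff)
next
  fix c and x :: "'x \<times> 'x" assume x: "x \<in> DA \<times> DS"
  then show "opBhat B (scaleY sc c x) = scaleY sc c (opBhat B x)"
    by (auto simp: opBhat_def scaleY_def lin_scale[OF B_lin] mem_Times_iff)
qed

lemma Bhat_sym: assumes Bsym: "symmetric_op sc UNIV ip DS B"
  shows "symmetric_op (scaleY sc) (DS \<times> UNIV) (ipY ip S) (DA \<times> DS) (opBhat B)"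
proof -
  have Bs: "\<forall>x\<in>DS. \<forall>y\<in>DS. ip (B x) y = ip x (B y)"
    using Bsym by (auto simp: symmetric_op_def)
  have "\<forall>x\<in>DA \<times> DS. \<forall>y\<in>DA \<times> DS. ipY ip S (opBhat B x) y = ipY ip S x (opBhat B y)"
    using Bs lin_0[OF S_lin] by (auto simp: opBhat_def ipY_def ip_minus_left ip_minus_right mem_Times_iff)
  then show ?thesis unfolding symmetric_op_def using Bhat_lin Y_dense by blast
qed

lemma Bhat_bounded: assumes "bounded_op ip DS B"
  shows "bounded_op (ipY ip S) (DA \<times> DS) (opBhat B)
          \<and> op_norm (ipY ip S) (DA \<times> DS) (opBhat B) \<le> op_norm ip DS B"
proof -
  obtain M where M: "\<forall>x\<in>DS. nrm (B x) \<le> M * nrm x" using assms by (auto simp: bounded_op_def)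
  define SB where "SB = {M. 0 \<le> M \<and> (\<forall>x\<in>DS. nrm (B x) \<le> M * nrm x)}"
  define SY where "SY = {M. 0 \<le> M \<and> (\<forall>x\<in>DA \<times> DS. hY (opBhat B x) \<le> M * hY x)}"
  have sub: "SB \<subseteq> SY"
  proof
    fix K assume "K \<in> SB"
    then have K: "0 \<le> K" "\<forall>x\<in>DS. nrm (B x) \<le> K * nrm x" by (auto simp: SB_def)
    have "\<forall>x\<in>DA \<times> DS. hY (opBhat B x) \<le> K * hY x"
    proof
      fix x :: "'x \<times> 'x" assume "x \<in> DA \<times> DS"
      then have "nrm (B (snd x)) \<le> K * nrm (snd x)" using K by (auto simp: mem_Times_iff)
      also have "\<dots> \<le> K * hY x" using K(1) hY_ge2[of x] by (intro mult_left_mono)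
      finally show "hY (opBhat B x) \<le> K * hY x" by (simp add: hY_Bhat)
    qed
    then show "K \<in> SY" using K(1) by (simp add: SY_def)
  qed
  have ne: "max M 0 \<in> SB"
  proof -
    have "\<forall>x\<in>DS. nrm (B x) \<le> max M 0 * nrm x"
      using M by (meson max.cobounded1 mult_right_mono nrm_nonneg order_trans)
    then show ?thesis by (simp add: SB_def)
  qed
  have bb: "bdd_below SY" by (rule bdd_belowI[of _ 0]) (simp add: SY_def)
  have "Inf SY \<le> Inf SB" using cInf_superset_mono[OF _ bb sub] ne by blast
  moreover have "bounded_op (ipY ip S) (DA \<times> DS) (opBhat B)"
    using sub ne unfolding bounded_op_def SY_def by blast
  ultimately show ?thesis by (simp add: op_norm_def SY_def SB_def)
qed

lemma V_lin: "lin_op (scaleY sc) (DS \<times> UNIV) (DS \<times> UNIV) (opV sc C)"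
  unfolding lin_op_def
proof (intro conjI ballI allI)
  show "csubspace (scaleY sc) (DS \<times> UNIV)" by (rule Y_csub)
  show "DS \<times> UNIV \<subseteq> DS \<times> UNIV" by simp
  show "opV sc C ` (DS \<times> UNIV) \<subseteq> DS \<times> UNIV"
    using csub_0[OF DS_csub] by (auto simp: opV_def)
next
  fix x y :: "'x \<times> 'x" assume x: "x \<in> DS \<times> UNIV" and y: "y \<in> DS \<times> UNIV"
  then show "opV sc C (x + y) = opV sc C x + opV sc C y"
    by (auto simp: opV_def lin_add[OF C_lin] mem_Times_iff vs.scale_right_distrib)
next
  fix c and x :: "'x \<times> 'x" assume x: "x \<in> DS \<times> UNIV"
  then show "opV sc C (scaleY sc c x) = scaleY sc c (opV sc C x)"
    by (auto simp: opV_def scaleY_def lin_scale[OF C_lin] mem_Times_iff mult.commute)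
qed

lemma V_bound: assumes x: "x \<in> DS \<times> UNIV"
  shows "hY (opV sc C x) \<le> sqrt (cc\<^sup>2 + cd\<^sup>2 / eps) * hY x"
proof -
  have x1: "fst x \<in> DS" using x by auto
  have K0: "0 \<le> cc\<^sup>2 + cd\<^sup>2 / eps"
    using eps_pos by (intro add_nonneg_nonneg divide_nonneg_pos) auto
  have l: "(nrm (fst x))\<^sup>2 \<le> (nrm (S (fst x)))\<^sup>2 / eps"
    using S_lower[OF x1] eps_pos by (simp add: field_simps)
  have "(nrm (C (fst x)))\<^sup>2 \<le> cc\<^sup>2 * (nrm (S (fst x)))\<^sup>2 + cd\<^sup>2 * (nrm (fst x))\<^sup>2"
    using C_bound x1 by blast
  also have "\<dots> \<le> cc\<^sup>2 * (nrm (S (fst x)))\<^sup>2 + cd\<^sup>2 * ((nrm (S (fst x)))\<^sup>2 / eps)"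
    using l by (intro add_left_mono mult_left_mono) auto
  also have "\<dots> = (cc\<^sup>2 + cd\<^sup>2 / eps) * (nrm (S (fst x)))\<^sup>2" by (simp add: algebra_simps)
  finally have "nrm (C (fst x)) \<le> sqrt ((cc\<^sup>2 + cd\<^sup>2 / eps) * (nrm (S (fst x)))\<^sup>2)"
    by (rule real_le_rsqrt)
  also have "\<dots> = sqrt (cc\<^sup>2 + cd\<^sup>2 / eps) * nrm (S (fst x))"
    using K0 by (simp add: real_sqrt_mult)
  also have "\<dots> \<le> sqrt (cc\<^sup>2 + cd\<^sup>2 / eps) * hY x" using K0 by (intro mult_left_mono hY_ge1) simp
  finally show ?thesis by (simp add: hY_V)
qed

lemma V_bounded: "bounded_op (ipY ip S) (DS \<times> UNIV) (opV sc C)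
     \<and> op_norm (ipY ip S) (DS \<times> UNIV) (opV sc C) \<le> sqrt (cc\<^sup>2 + cd\<^sup>2 / eps)"
proof -
  define SY where "SY = {M. 0 \<le> M \<and> (\<forall>x\<in>DS \<times> UNIV. hY (opV sc C x) \<le> M * hY x)}"
  have mem: "sqrt (cc\<^sup>2 + cd\<^sup>2 / eps) \<in> SY"
    using V_bound eps_pos by (simp add: SY_def)
  have bb: "bdd_below SY" by (rule bdd_belowI[of _ 0]) (simp add: SY_def)
  have "Inf SY \<le> sqrt (cc\<^sup>2 + cd\<^sup>2 / eps)" by (rule cInf_lower[OF mem bb])
  moreover have "bounded_op (ipY ip S) (DS \<times> UNIV) (opV sc C)"
    unfolding bounded_op_def using V_bound by blast
  ultimately show ?thesis by (simp add: op_norm_def SY_def)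
qed

end

theorem theorem3:
  fixes sc :: "complex \<Rightarrow> 'x::ab_group_add \<Rightarrow> 'x"
    and ip :: "'x \<Rightarrow> 'x \<Rightarrow> complex"
    and A S B C :: "'x \<Rightarrow> 'x"
    and DA DS :: "'x set"
    and \<epsilon> a b c d :: real
  assumes X_hilbert: "hilbert_space sc UNIV ip"
    and X_nontrivial: "\<exists>x::'x. x \<noteq> 0"
    and A_sa: "selfadjoint_op sc UNIV ip DA A"
    and eps_pos: "0 < \<epsilon>"
    and A_lower: "\<forall>x\<in>DA. Re (ip x (A x)) \<ge> \<epsilon> * Re (ip x x)"
    and S_sa: "selfadjoint_op sc UNIV ip DS S"
    and S_pos: "\<forall>x\<in>DS. Re (ip x (S x)) \<ge> 0"
    and S_sq_dom: "DA = {x\<in>DS. S x \<in> DS}"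
    and S_sq: "\<forall>x\<in>DA. S (S x) = A x"
    and B_lin: "lin_op sc UNIV DS B"
    and a_range: "0 \<le> a" "a < 1"
    and B_bound: "\<forall>x\<in>DS. (hnorm ip (B x))\<^sup>2 \<le> a\<^sup>2 * (hnorm ip (S x))\<^sup>2 + b\<^sup>2 * (hnorm ip x)\<^sup>2"
    and C_lin: "lin_op sc UNIV DS C"
    and C_bound: "\<forall>x\<in>DS. (hnorm ip (C x))\<^sup>2 \<le> c\<^sup>2 * (hnorm ip (S x))\<^sup>2 + d\<^sup>2 * (hnorm ip x)\<^sup>2"
  shows
    "hilbert_space (scaleY sc) (DS \<times> UNIV) (ipY ip S)
     \<and> selfadjoint_op (scaleY sc) (DS \<times> UNIV) (ipY ip S) (DA \<times> DS) (opH sc A)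
     \<and> lin_op (scaleY sc) (DS \<times> UNIV) (DA \<times> DS) (opBhat B)
     \<and> (symmetric_op sc UNIV ip DS B \<longrightarrow>
          symmetric_op (scaleY sc) (DS \<times> UNIV) (ipY ip S) (DA \<times> DS) (opBhat B))
     \<and> (bounded_op ip DS B \<longrightarrow>
          bounded_op (ipY ip S) (DA \<times> DS) (opBhat B)
          \<and> op_norm (ipY ip S) (DA \<times> DS) (opBhat B) \<le> op_norm ip DS B)
     \<and> closed_op (ipY ip S) (DS \<times> UNIV) (DA \<times> DS) (\<lambda>\<xi>. opH sc A \<xi> + opBhat B \<xi>)
     \<and> (symmetric_op sc UNIV ip DS B \<longrightarrow>
          selfadjoint_op (scaleY sc) (DS \<times> UNIV) (ipY ip S) (DA \<times> DS)
             (\<lambda>\<xi>. opH sc A \<xi> + opBhat B \<xi>))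
     \<and> lin_op (scaleY sc) (DS \<times> UNIV) (DS \<times> UNIV) (opV sc C)
     \<and> bounded_op (ipY ip S) (DS \<times> UNIV) (opV sc C)
     \<and> op_norm (ipY ip S) (DS \<times> UNIV) (opV sc C) \<le> sqrt (c\<^sup>2 + d\<^sup>2 / \<epsilon>)"
proof -
  interpret setting sc ip A S B C DA DS \<epsilon> a b c d
    by (unfold_locales) (fact X_hilbert A_sa eps_pos A_lower S_sa S_sq_dom S_sq B_lin a_range
        B_bound C_lin C_bound)+
  have H_sa: "selfadjoint_op (scaleY sc) (DS \<times> UNIV) (ipY ip S) (DA \<times> DS) (opH sc A)"
    using HB_sa[OF zero_sym] by (simp add: H_eq)
  have eqf: "(\<lambda>\<xi>. opH sc A \<xi> + opBhat B \<xi>) = HB B"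
    by (rule ext) (simp add: HB_def)
  show ?thesis
    unfolding eqf
    using Y_hilbert H_sa Bhat_lin Bhat_sym Bhat_bounded HB_closed HB_sa V_lin V_bounded
    by blast
qed

end
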